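(* Let $\mathcal{H}=(\mathcal{A},\Delta_{\mathcal{A}},S_{\mathcal{A}},\varepsilon_{\mathcal{A}})$ be a Hopf algebra over a field $k$, let $\mathcal{B},\mathcal{C}$ be unital $k$-algebras and $\Phi:\mathcal{A}\to\mathcal{B}$, $\Psi:\mathcal{A}\to\mathcal{C}$ surjective unital algebra homomorphisms. Then $\Psi$ and $\Phi$ cocommute, i.e. $(\Psi\otimes\Phi)\circ\Delta_{\mathcal{A}}=(\Psi\otimes\Phi)\circ\Delta_{\mathcal{A}}^{\mathrm{op}}$, if and only if \[(\Phi\otimes\Psi)(\mathrm{ad}(x))=\mathds{1}_{\mathcal{B}}\otimes\Psi(x)\quad\text{for all }x\in\mathcal{A}.\]
   Context: Sweedler notation $\Delta_{\mathcal{A}}(x)=x_{(1)}\otimes x_{(2)}$, $(\Delta_{\mathcal{A}}\otimes\mathrm{id})\Delta_{\mathcal{A}}(x)=x_{(1)}\otimes x_{(2)}\otimes x_{(3)}$. $\Delta_{\mathcal{A}}^{\mathrm{op}}=\sigma\circ\Delta_{\mathcal{A}}$ is the opposite comultiplication, $\Delta^{\mathrm{op}}_{\mathcal{A}}(x)=x_{(2)}\otimes x_{(1)}$. The adjoint coaction $\mathrm{ad}:\mathcal{A}\to\mathcal{A}\otimes\mathcal{A}$ is the linear map $\mathrm{ad}(x)=x_{(1)}S_{\mathcal{A}}(x_{(3)})\otimes x_{(2)}$. *)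

theory Defs
  imports Main
begin

text \<open>A unital k-algebra: a type with ring and unital multiplication (the unit is
not required to differ from 0), plus a scalar multiplication by the field 'k
making it a k-vector space with bilinear multiplication.\<close>

definition k_algebra :: "('k::field \<Rightarrow> 'a::{ring,monoid_mult} \<Rightarrow> 'a) \<Rightarrow> bool" where
  "k_algebra s \<longleftrightarrow>
     (\<forall>c x y. s c (x + y) = s c x + s c y) \<and>
     (\<forall>c d x. s (c + d) x = s c x + s d x) \<and>
     (\<forall>c d x. s c (s d x) = s (c * d) x) \<and>
     (\<forall>x. s 1 x = x) \<and>
     (\<forall>c x y. s c (x * y) = s c x * y \<and> s c (x * y) = x * s c y)"

definition k_linear :: "('k::field \<Rightarrow> 'a::ab_group_add \<Rightarrow> 'a) \<Rightarrow> ('k \<Rightarrow> 'b::ab_group_add \<Rightarrow> 'b)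
    \<Rightarrow> ('a \<Rightarrow> 'b) \<Rightarrow> bool" where
  "k_linear s1 s2 f \<longleftrightarrow> (\<forall>x y. f (x + y) = f x + f y) \<and> (\<forall>c x. f (s1 c x) = s2 c (f x))"

definition unital_alg_hom :: "('k::field \<Rightarrow> 'a::{ring,monoid_mult} \<Rightarrow> 'a)
    \<Rightarrow> ('k \<Rightarrow> 'b::{ring,monoid_mult} \<Rightarrow> 'b) \<Rightarrow> ('a \<Rightarrow> 'b) \<Rightarrow> bool" where
  "unital_alg_hom s1 s2 f \<longleftrightarrow> k_linear s1 s2 f \<and> (\<forall>x y. f (x * y) = f x * f y) \<and> f 1 = 1"

text \<open>The free k-vector space on a set X is modelled by functions X => k;
a formal sum of generators is given by a list. The tensor product
V (x) W is the free vector space on V x W modulo the subspace spanned by the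
bilinearity relators; so an element of V (x) W is represented by a finite list
of pairs (v_i, w_i), standing for the sum of v_i (x) w_i, and two representatives
denote the same tensor iff their difference lies in the span of the relators.
Threefold tensors are treated the same way with trilinearity relators.\<close>

definition gen :: "'x \<Rightarrow> 'x \<Rightarrow> 'k::field" where
  "gen x = (\<lambda>y. if y = x then 1 else 0)"

definition fsum :: "'x list \<Rightarrow> 'x \<Rightarrow> 'k::field" where
  "fsum xs = (\<lambda>y. sum_list (map (\<lambda>x. gen x y) xs))"

definition lin_comb :: "('k::field \<times> ('x \<Rightarrow> 'k)) list \<Rightarrow> 'x \<Rightarrow> 'k" where
  "lin_comb l = (\<lambda>y. sum_list (map (\<lambda>(c, r). c * r y) l))"

definition in_span :: "('x \<Rightarrow> 'k::field) set \<Rightarrow> ('x \<Rightarrow> 'k) \<Rightarrow> bool" where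
  "in_span R t \<longleftrightarrow> (\<exists>l. set (map snd l) \<subseteq> R \<and> t = lin_comb l)"

definition rel2 :: "('k::field \<Rightarrow> 'a::ab_group_add \<Rightarrow> 'a) \<Rightarrow> ('k \<Rightarrow> 'b::ab_group_add \<Rightarrow> 'b)
    \<Rightarrow> ('a \<times> 'b \<Rightarrow> 'k) set" where
  "rel2 sA sB =
     {(\<lambda>z. gen (a + a', b) z - gen (a, b) z - gen (a', b) z) | a a' b. True} \<union>
     {(\<lambda>z. gen (a, b + b') z - gen (a, b) z - gen (a, b') z) | a b b'. True} \<union>
     {(\<lambda>z. gen (sA c a, b) z - c * gen (a, b) z) | c a b. True} \<union>
     {(\<lambda>z. gen (a, sB c b) z - c * gen (a, b) z) | c a b. True}"

definition teq2 :: "('k::field \<Rightarrow> 'a::ab_group_add \<Rightarrow> 'a) \<Rightarrow> ('k \<Rightarrow> 'b::ab_group_add \<Rightarrow> 'b)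
    \<Rightarrow> ('a \<times> 'b) list \<Rightarrow> ('a \<times> 'b) list \<Rightarrow> bool" where
  "teq2 sA sB t u \<longleftrightarrow> in_span (rel2 sA sB) (\<lambda>z. fsum t z - fsum u z)"

definition rel3 :: "('k::field \<Rightarrow> 'a::ab_group_add \<Rightarrow> 'a) \<Rightarrow> ('k \<Rightarrow> 'b::ab_group_add \<Rightarrow> 'b)
    \<Rightarrow> ('k \<Rightarrow> 'c::ab_group_add \<Rightarrow> 'c) \<Rightarrow> ('a \<times> 'b \<times> 'c \<Rightarrow> 'k) set" where
  "rel3 sA sB sC =
     {(\<lambda>z. gen (a + a', b, d) z - gen (a, b, d) z - gen (a', b, d) z) | a a' b d. True} \<union>
     {(\<lambda>z. gen (a, b + b', d) z - gen (a, b, d) z - gen (a, b', d) z) | a b b' d. True} \<union>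
     {(\<lambda>z. gen (a, b, d + d') z - gen (a, b, d) z - gen (a, b, d') z) | a b d d'. True} \<union>
     {(\<lambda>z. gen (sA c a, b, d) z - c * gen (a, b, d) z) | c a b d. True} \<union>
     {(\<lambda>z. gen (a, sB c b, d) z - c * gen (a, b, d) z) | c a b d. True} \<union>
     {(\<lambda>z. gen (a, b, sC c d) z - c * gen (a, b, d) z) | c a b d. True}"

definition teq3 :: "('k::field \<Rightarrow> 'a::ab_group_add \<Rightarrow> 'a) \<Rightarrow> ('k \<Rightarrow> 'b::ab_group_add \<Rightarrow> 'b)
    \<Rightarrow> ('k \<Rightarrow> 'c::ab_group_add \<Rightarrow> 'c) \<Rightarrow> ('a \<times> 'b \<times> 'c) list \<Rightarrow> ('a \<times> 'b \<times> 'c) list \<Rightarrow> bool" where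
  "teq3 sA sB sC t u \<longleftrightarrow> in_span (rel3 sA sB sC) (\<lambda>z. fsum t z - fsum u z)"

text \<open>The comultiplication is a map Delta : A -> A (x) A, given by choosing for each x a
representative list of pairs (Sweedler: x_(1) (x) x_(2)). All axioms are stated
up to equality in the tensor product, so the choice of representatives is immaterial.\<close>

definition hopf_algebra ::
  "('k::field \<Rightarrow> 'a::{ring,monoid_mult} \<Rightarrow> 'a) \<Rightarrow> ('a \<Rightarrow> ('a \<times> 'a) list)
     \<Rightarrow> ('a \<Rightarrow> 'a) \<Rightarrow> ('a \<Rightarrow> 'k) \<Rightarrow> bool" where
  "hopf_algebra s \<Delta> S \<epsilon> \<longleftrightarrow>
     k_algebra s \<and>
     \<comment> \<open>Delta is k-linear\<close>
     (\<forall>x y. teq2 s s (\<Delta> (x + y)) (\<Delta> x @ \<Delta> y)) \<and>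
     (\<forall>c x. teq2 s s (\<Delta> (s c x)) (map (\<lambda>(a, b). (s c a, b)) (\<Delta> x))) \<and>
     \<comment> \<open>Delta is a unital algebra homomorphism into A (x) A\<close>
     (\<forall>x y. teq2 s s (\<Delta> (x * y)) [(a * a', b * b'). (a, b) \<leftarrow> \<Delta> x, (a', b') \<leftarrow> \<Delta> y]) \<and>
     teq2 s s (\<Delta> 1) [(1, 1)] \<and>
     \<comment> \<open>coassociativity\<close>
     (\<forall>x. teq3 s s s [(a1, a2, b). (a, b) \<leftarrow> \<Delta> x, (a1, a2) \<leftarrow> \<Delta> a]
                     [(a, b1, b2). (a, b) \<leftarrow> \<Delta> x, (b1, b2) \<leftarrow> \<Delta> b]) \<and>
     \<comment> \<open>counit: unital algebra homomorphism A -> k\<close>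
     k_linear s (*) \<epsilon> \<and> (\<forall>x y. \<epsilon> (x * y) = \<epsilon> x * \<epsilon> y) \<and> \<epsilon> 1 = 1 \<and>
     (\<forall>x. sum_list [s (\<epsilon> a) b. (a, b) \<leftarrow> \<Delta> x] = x) \<and>
     (\<forall>x. sum_list [s (\<epsilon> b) a. (a, b) \<leftarrow> \<Delta> x] = x) \<and>
     \<comment> \<open>antipode: k-linear, convolution inverse of the identity\<close>
     k_linear s s S \<and>
     (\<forall>x. sum_list [S a * b. (a, b) \<leftarrow> \<Delta> x] = s (\<epsilon> x) 1) \<and>
     (\<forall>x. sum_list [a * S b. (a, b) \<leftarrow> \<Delta> x] = s (\<epsilon> x) 1)"

text \<open>ad(x) = x_(1) S(x_(3)) (x) x_(2), where (Delta (x) id) Delta x = x_(1) (x) x_(2) (x) x_(3).\<close>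
definition ad :: "('a::{ring,monoid_mult} \<Rightarrow> ('a \<times> 'a) list) \<Rightarrow> ('a \<Rightarrow> 'a) \<Rightarrow> 'a \<Rightarrow> ('a \<times> 'a) list" where
  "ad \<Delta> S x = [(a1 * S b, a2). (a, b) \<leftarrow> \<Delta> x, (a1, a2) \<leftarrow> \<Delta> a]"

definition tmap :: "('a \<Rightarrow> 'b) \<Rightarrow> ('c \<Rightarrow> 'd) \<Rightarrow> ('a \<times> 'c) list \<Rightarrow> ('b \<times> 'd) list" where
  "tmap f g t = map (\<lambda>(a, b). (f a, g b)) t"

definition flip_t :: "('a \<times> 'b) list \<Rightarrow> ('b \<times> 'a) list" where
  "flip_t t = map (\<lambda>(a, b). (b, a)) t"

end

theory Submission
  imports Defs
begin


definition lsum :: "('x \<Rightarrow> 'k::field) \<Rightarrow> ('k \<times> 'x) list \<Rightarrow> 'k" where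
  "lsum g l = sum_list (map (\<lambda>(c,x). c * g x) l)"

lemma lsum_Nil[simp]: "lsum g [] = 0" by (simp add: lsum_def)
lemma lsum_Cons[simp]: "lsum g ((c,x)#l) = c * g x + lsum g l" by (simp add: lsum_def)
lemma lsum_append[simp]: "lsum g (l1@l2) = lsum g l1 + lsum g l2" by (simp add: lsum_def)
lemma lsum_ones: "lsum g (map (\<lambda>x. (c,x)) t) = c * sum_list (map g t)"
  by (induction t) (auto simp: algebra_simps)

lemma lsum_expand:
  assumes "finite A" "snd ` set l \<subseteq> A"
  shows "lsum g l = (\<Sum>y\<in>A. lsum (\<lambda>x. gen x y) l * g y)"
  using assms(2)
proof (induction l)
  case Nil then show ?case by simp
next
  case (Cons p l)
  obtain c x where p: "p = (c,x)" by force
  with Cons have xA: "x \<in> A" and IH: "lsum g l = (\<Sum>y\<in>A. lsum (\<lambda>x. gen x y) l * g y)" by auto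
  have "(\<Sum>y\<in>A. lsum (\<lambda>x. gen x y) (p#l) * g y) = (\<Sum>y\<in>A. c * (gen x y * g y)) + (\<Sum>y\<in>A. lsum (\<lambda>x. gen x y) l * g y)"
    by (simp add: p sum.distrib algebra_simps)
  also have "(\<Sum>y\<in>A. c * (gen x y * g y)) = c * g x"
  proof -
    have "(\<Sum>y\<in>A. c * (gen x y * g y)) = (\<Sum>y\<in>A. if y = x then c * g y else 0)"
      by (rule sum.cong) (auto simp: gen_def)
    then show ?thesis using xA assms(1) by simp
  qed
  finally show ?case using IH p by simp
qed

lemma lsum_eq:
  assumes "\<forall>y. lsum (\<lambda>x. gen x y) l1 = lsum (\<lambda>x. gen x y) l2"
  shows "lsum g l1 = lsum g l2"
  using lsum_expand[of "snd`set l1 \<union> snd`set l2" l1 g] lsum_expand[of "snd`set l1 \<union> snd`set l2" l2 g] assms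
  by auto

lemma fsum_append[simp]: "fsum (xs @ ys) z = fsum xs z + fsum ys z"
  by (simp add: fsum_def)
lemma fsum_Nil[simp]: "fsum [] z = 0" by (simp add: fsum_def)
lemma fsum_Cons[simp]: "fsum (x#xs) z = gen x z + fsum xs z" by (simp add: fsum_def)
lemma fsum_concat: "fsum (concat (map F t)) z = sum_list (map (\<lambda>x. fsum (F x) z) t)"
  by (induction t) auto
lemma fsum_lsum: "fsum t y = sum_list (map (\<lambda>x. gen x y) t)" by (simp add: fsum_def)

lemma in_span_zero: "in_span R (\<lambda>z. 0)"
  unfolding in_span_def by (rule exI[of _ "[]"]) (simp add: lin_comb_def)

lemma in_span_cong: "in_span R f \<Longrightarrow> (\<And>z. f z = g z) \<Longrightarrow> in_span R g"
proof -
  assume "in_span R f" "\<And>z. f z = g z"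
  then have "f = g" by auto
  with \<open>in_span R f\<close> show ?thesis by simp
qed

lemma in_span_add: "in_span R f \<Longrightarrow> in_span R g \<Longrightarrow> in_span R (\<lambda>z. f z + g z)"
  unfolding in_span_def
proof (elim exE conjE)
  fix l1 l2 assume "set (map snd l1) \<subseteq> R" "f = lin_comb l1" "set (map snd l2) \<subseteq> R" "g = lin_comb l2"
  then show "\<exists>l. set (map snd l) \<subseteq> R \<and> (\<lambda>z. f z + g z) = lin_comb l"
    by (intro exI[of _ "l1@l2"]) (auto simp: lin_comb_def)
qed

lemma map_snd_scale: "map snd (map (\<lambda>(d,r). (c*d, r)) l) = map snd l"
  by (induction l) auto

lemma lin_comb_scale: "lin_comb (map (\<lambda>(d,r). (c*d, r)) l) z = c * lin_comb l z"
  by (induction l) (auto simp: lin_comb_def algebra_simps)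

lemma in_span_scale: "in_span R f \<Longrightarrow> in_span R (\<lambda>z. c * f z)"
  unfolding in_span_def
proof (elim exE conjE)
  fix l assume "set (map snd l) \<subseteq> R" "f = lin_comb l"
  then show "\<exists>l. set (map snd l) \<subseteq> R \<and> (\<lambda>z. c * f z) = lin_comb l"
    by (intro exI[of _ "map (\<lambda>(d,r). (c*d, r)) l"]) (auto simp: map_snd_scale lin_comb_scale)
qed

lemma in_span_gen: "r \<in> R \<Longrightarrow> in_span R r"
  unfolding in_span_def by (rule exI[of _ "[(1,r)]"]) (auto simp: lin_comb_def)

lemma in_span_neg: "in_span R f \<Longrightarrow> in_span R (\<lambda>z. - f z)"
  using in_span_scale[of R f "-1"] by simp

lemma in_span_diff: "in_span R f \<Longrightarrow> in_span R g \<Longrightarrow> in_span R (\<lambda>z. f z - g z)"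
  using in_span_add[OF _ in_span_neg[of R g], of f] by simp

lemma in_span_sum_list: "(\<forall>p\<in>set l. in_span R (h p)) \<Longrightarrow> in_span R (\<lambda>z. sum_list (map (\<lambda>p. h p z) l))"
  by (induction l) (auto intro: in_span_zero in_span_add)

lemma transfer:
  fixes RA :: "('x \<Rightarrow> 'k::field) set" and RB :: "('y \<Rightarrow> 'k) set"
  assumes R: "\<forall>r\<in>RA. \<exists>rl. r = (\<lambda>y. lsum (\<lambda>x. gen x y) rl) \<and> in_span RB (\<lambda>z. lsum (\<lambda>x. fsum (F x) z) rl)"
    and sp: "in_span RA (\<lambda>z. fsum t z - fsum u z)"
  shows "in_span RB (\<lambda>z. fsum (concat (map F t)) z - fsum (concat (map F u)) z)"
proof -
  from R obtain RL where RL: "\<And>r. r\<in>RA \<Longrightarrow> r = (\<lambda>y. lsum (\<lambda>x. gen x y) (RL r)) \<and> in_span RB (\<lambda>z. lsum (\<lambda>x. fsum (F x) z) (RL r))"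
    by metis
  from sp obtain l where l: "set (map snd l) \<subseteq> RA" "(\<lambda>z. fsum t z - fsum u z) = lin_comb l"
    by (auto simp: in_span_def)
  define BL where "BL = concat (map (\<lambda>(c,r). map (\<lambda>(d,x). (c*d,x)) (RL r)) l)"
  define TL where "TL = map (\<lambda>x. (1::'k,x)) t @ map (\<lambda>x. (-1,x)) u"
  have BLsum: "lsum g BL = sum_list (map (\<lambda>(c,r). c * lsum g (RL r)) l)" for g
  proof -
    have "lsum g (map (\<lambda>(d,x). (c*d,x)) L) = c * lsum g L" for c L
      by (induction L) (auto simp: algebra_simps)
    then show ?thesis unfolding BL_def by (induction l) auto
  qed
  have TLsum: "lsum g TL = sum_list (map g t) - sum_list (map g u)" for g
    unfolding TL_def by (simp add: lsum_ones)
  have "lsum (\<lambda>x. gen x y) TL = lsum (\<lambda>x. gen x y) BL" for y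
  proof -
    have "lsum (\<lambda>x. gen x y) TL = lin_comb l y"
      using fun_cong[OF l(2), of y] by (simp add: TLsum fsum_lsum)
    also have "\<dots> = sum_list (map (\<lambda>(c,r). c * lsum (\<lambda>x. gen x y) (RL r)) l)"
      using l(1)
    proof (induction l)
      case Nil then show ?case by (simp add: lin_comb_def)
      next
      case (Cons p l)
      obtain c r where p: "p = (c,r)" by force
      with Cons have "r \<in> RA" by auto
      from RL[OF this] have "r y = lsum (\<lambda>x. gen x y) (RL r)" by (metis)
      with Cons p show ?case by (auto simp: lin_comb_def)
    qed
    finally show ?thesis by (simp add: BLsum)
  qed
  then have E: "lsum (\<lambda>x. fsum (F x) z) TL = lsum (\<lambda>x. fsum (F x) z) BL" for z
    by (intro lsum_eq) auto
  have "in_span RB (\<lambda>z. sum_list (map (\<lambda>p. (case p of (c,r) \<Rightarrow> c * lsum (\<lambda>x. fsum (F x) z) (RL r))) l))"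
    by (rule in_span_sum_list) (use l(1) RL in \<open>auto intro!: in_span_scale\<close>)
  then show ?thesis
  proof (rule in_span_cong)
    fix z
    have "sum_list (map (\<lambda>p. (case p of (c,r) \<Rightarrow> c * lsum (\<lambda>x. fsum (F x) z) (RL r))) l) = lsum (\<lambda>x. fsum (F x) z) BL"
      by (simp add: BLsum)
    also have "\<dots> = lsum (\<lambda>x. fsum (F x) z) TL" by (rule E[symmetric])
    finally show "sum_list (map (\<lambda>p. (case p of (c,r) \<Rightarrow> c * lsum (\<lambda>x. fsum (F x) z) (RL r))) l) = fsum (concat (map F t)) z - fsum (concat (map F u)) z"
      by (simp add: TLsum fsum_concat)
  qed
qed



lemma teq2_refl: "teq2 s1 s2 t t"
  unfolding teq2_def by (rule in_span_cong[OF in_span_zero]) simp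

lemma teq2_eq: "t = u \<Longrightarrow> teq2 s1 s2 t u" by (simp add: teq2_refl)

lemma teq2_sym: "teq2 s1 s2 t u \<Longrightarrow> teq2 s1 s2 u t"
  unfolding teq2_def by (drule in_span_neg) (erule in_span_cong, simp)

lemma teq2_trans: "teq2 s1 s2 t u \<Longrightarrow> teq2 s1 s2 u v \<Longrightarrow> teq2 s1 s2 t v"
  unfolding teq2_def by (drule (1) in_span_add) (erule in_span_cong, simp)

lemma teq2_append: "teq2 s1 s2 t u \<Longrightarrow> teq2 s1 s2 t' u' \<Longrightarrow> teq2 s1 s2 (t@t') (u@u')"
  unfolding teq2_def by (drule (1) in_span_add) (erule in_span_cong, simp)

lemma teq2_concat: "(\<And>i. i\<in>set xs \<Longrightarrow> teq2 s1 s2 (f i) (g i)) \<Longrightarrow> teq2 s1 s2 (concat (map f xs)) (concat (map g xs))"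
  by (induction xs) (auto intro: teq2_refl teq2_append)

lemma teq2_add1: "teq2 s1 s2 [(a+a',b)] [(a,b),(a',b)]"
  unfolding teq2_def
proof (rule in_span_cong[OF in_span_gen[of "\<lambda>z. gen (a + a', b) z - gen (a, b) z - gen (a', b) z"]])
  show "(\<lambda>z. gen (a + a', b) z - gen (a, b) z - gen (a', b) z) \<in> rel2 s1 s2" unfolding rel2_def by blast
qed simp

lemma teq2_add2: "teq2 s1 s2 [(a,b+b')] [(a,b),(a,b')]"
  unfolding teq2_def
proof (rule in_span_cong[OF in_span_gen[of "\<lambda>z. gen (a, b+b') z - gen (a, b) z - gen (a, b') z"]])
  show "(\<lambda>z. gen (a, b+b') z - gen (a, b) z - gen (a, b') z) \<in> rel2 s1 s2" unfolding rel2_def by blast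
qed simp

lemma teq2_smove: "teq2 s1 s2 [(s1 c a, b)] [(a, s2 c b)]"
  unfolding teq2_def
proof (rule in_span_cong[OF in_span_diff[OF in_span_gen[of "\<lambda>z. gen (s1 c a, b) z - c * gen (a, b) z"]
      in_span_gen[of "\<lambda>z. gen (a, s2 c b) z - c * gen (a, b) z"]]])
  show "(\<lambda>z. gen (s1 c a, b) z - c * gen (a, b) z) \<in> rel2 s1 s2" unfolding rel2_def by blast
  show "(\<lambda>z. gen (a, s2 c b) z - c * gen (a, b) z) \<in> rel2 s1 s2" unfolding rel2_def by blast
qed simp

definition scl :: "('k \<Rightarrow> 'y \<Rightarrow> 'y) \<Rightarrow> 'k \<Rightarrow> ('y \<times> 'z) list \<Rightarrow> ('y \<times> 'z) list" where
  "scl s c L = map (\<lambda>(y,z). (s c y, z)) L"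

lemma scl_span: "in_span (rel2 s1 s2) (\<lambda>z. fsum (scl s1 c L) z - c * fsum L z)"
proof (induction L)
  case Nil then show ?case by (simp add: scl_def in_span_zero)
next
  case (Cons p L)
  obtain a b where p: "p = (a,b)" by force
  have "in_span (rel2 s1 s2) (\<lambda>z. gen (s1 c a, b) z - c * gen (a, b) z)"
    by (rule in_span_gen) (unfold rel2_def, blast)
  from in_span_add[OF this Cons] show ?case
    by (rule in_span_cong) (simp add: p scl_def algebra_simps)
qed

lemma scl_concat: "scl s c (concat (map f xs)) = concat (map (\<lambda>i. scl s c (f i)) xs)"
  by (induction xs) (auto simp: scl_def)

lemma teq2_zero: "teq2 s1 s2 [(0,b)] []"
proof -
  have "teq2 s1 s2 [(0+0,b)] [(0,b),(0,b)]" by (rule teq2_add1)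
  then have "in_span (rel2 s1 s2) (\<lambda>z. - gen (0,b) z)" unfolding teq2_def
    by (rule in_span_cong) simp
  from in_span_neg[OF this] show ?thesis unfolding teq2_def by (rule in_span_cong) simp
qed

lemma teq2_sum1: "teq2 s1 s2 [(sum_list (map f ys), z)] (map (\<lambda>y. (f y, z)) ys)"
proof (induction ys)
  case Nil then show ?case by (simp add: teq2_zero)
next
  case (Cons y ys)
  have "teq2 s1 s2 [(f y + sum_list (map f ys), z)] ([(f y, z)] @ [(sum_list (map f ys), z)])"
    using teq2_add1 by simp
  moreover have "teq2 s1 s2 ([(f y, z)] @ [(sum_list (map f ys), z)]) ([(f y, z)] @ map (\<lambda>y. (f y, z)) ys)"
    by (rule teq2_append[OF teq2_refl Cons])
  ultimately show ?case by (auto intro: teq2_trans)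
qed

lemma teq2_zero2: "teq2 s1 s2 [(a,0)] []"
proof -
  have "teq2 s1 s2 [(a,0+0)] [(a,0),(a,0)]" by (rule teq2_add2)
  then have "in_span (rel2 s1 s2) (\<lambda>z. - gen (a,0) z)" unfolding teq2_def
    by (rule in_span_cong) simp
  from in_span_neg[OF this] show ?thesis unfolding teq2_def by (rule in_span_cong) simp
qed

lemma teq2_sum2: "teq2 s1 s2 [(a, sum_list (map f ys))] (map (\<lambda>y. (a, f y)) ys)"
proof (induction ys)
  case Nil then show ?case by (simp add: teq2_zero2)
next
  case (Cons y ys)
  have "teq2 s1 s2 [(a, f y + sum_list (map f ys))] ([(a, f y)] @ [(a, sum_list (map f ys))])"
    using teq2_add2 by simp
  moreover have "teq2 s1 s2 ([(a, f y)] @ [(a, sum_list (map f ys))]) ([(a, f y)] @ map (\<lambda>y. (a, f y)) ys)"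
    by (rule teq2_append[OF teq2_refl Cons])
  ultimately show ?case by (auto intro: teq2_trans)
qed

lemma teq2_additive_map:
  assumes "\<And>m m'. teq2 s1 s2 (T (m+m')) (T m @ T m')"
  shows "teq2 s1 s2 (T (sum_list ms)) (concat (map T ms))"
proof (induction ms)
  case Nil
  have "teq2 s1 s2 (T (0+0)) (T 0 @ T 0)" by (rule assms)
  then have "in_span (rel2 s1 s2) (\<lambda>z. - fsum (T 0) z)" unfolding teq2_def
    by (rule in_span_cong) simp
  from in_span_neg[OF this] show ?case unfolding teq2_def by (simp)
next
  case (Cons m ms)
  then show ?case using assms[of m "sum_list ms"]
    by (auto intro: teq2_trans teq2_append teq2_refl)
qed

lemma bilin_transfer:
  fixes F :: "'a::ab_group_add \<times> 'b::ab_group_add \<Rightarrow> ('y::ab_group_add \<times> 'z::ab_group_add) list"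
    and s1 :: "'k::field \<Rightarrow> 'a \<Rightarrow> 'a" and s2 :: "'k \<Rightarrow> 'b \<Rightarrow> 'b"
    and sY :: "'k \<Rightarrow> 'y \<Rightarrow> 'y" and sZ :: "'k \<Rightarrow> 'z \<Rightarrow> 'z"
  assumes A1: "\<And>a a' b. teq2 sY sZ (F (a+a', b)) (F (a,b) @ F (a',b))"
   and A2: "\<And>a b b'. teq2 sY sZ (F (a, b+b')) (F (a,b) @ F (a,b'))"
   and A3: "\<And>c a b. teq2 sY sZ (F (s1 c a, b)) (scl sY c (F (a,b)))"
   and A4: "\<And>c a b. teq2 sY sZ (F (a, s2 c b)) (scl sY c (F (a,b)))"
   and T: "teq2 s1 s2 t u"
  shows "teq2 sY sZ (concat (map F t)) (concat (map F u))"
  unfolding teq2_def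
proof (rule transfer[where RA="rel2 s1 s2"])
  show "in_span (rel2 s1 s2) (\<lambda>z. fsum t z - fsum u z)" using T by (simp add: teq2_def)
  have SC: "in_span (rel2 sY sZ) (\<lambda>z. fsum (F p) z - c * fsum (F q) z)"
    if "teq2 sY sZ (F p) (scl sY c (F q))" for p q c
    using in_span_add[OF that[unfolded teq2_def] scl_span[of sY sZ c "F q"]]
    by (rule in_span_cong) simp
  define P where "P r \<longleftrightarrow> (\<exists>rl. r = (\<lambda>y. lsum (\<lambda>x. gen x y) rl) \<and> in_span (rel2 sY sZ) (\<lambda>z. lsum (\<lambda>x. fsum (F x) z) rl))" for r
  have C1: "P (\<lambda>z. gen (a + a', b) z - gen (a, b) z - gen (a', b) z)" for a a' b
    unfolding P_def
      by (rule exI[of _ "[(1,(a+a',b)),(-1,(a,b)),(-1,(a',b))]"])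
         (use A1[of a a' b] in \<open>auto simp: teq2_def elim!: in_span_cong\<close>)
  have C2: "P (\<lambda>z. gen (a, b+b') z - gen (a, b) z - gen (a, b') z)" for a b b'
    unfolding P_def
      by (rule exI[of _ "[(1,(a,b+b')),(-1,(a,b)),(-1,(a,b'))]"])
         (use A2[of a b b'] in \<open>auto simp: teq2_def elim!: in_span_cong\<close>)
  have C3: "P (\<lambda>z. gen (s1 c a, b) z - c * gen (a, b) z)" for c a b
    unfolding P_def
      by (rule exI[of _ "[(1,(s1 c a,b)),(-c,(a,b))]"])
         (use SC[OF A3[where c=c and a=a and b=b]] in \<open>auto elim!: in_span_cong\<close>)
  have C4: "P (\<lambda>z. gen (a, s2 c b) z - c * gen (a, b) z)" for c a b
    unfolding P_def
      by (rule exI[of _ "[(1,(a, s2 c b)),(-c,(a,b))]"])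
         (use SC[OF A4[where c=c and a=a and b=b]] in \<open>auto elim!: in_span_cong\<close>)
  have "\<forall>r\<in>rel2 s1 s2. P r" unfolding rel2_def using C1 C2 C3 C4 by blast
  then show "\<forall>r\<in>rel2 s1 s2. \<exists>rl. r = (\<lambda>y. lsum (\<lambda>x. gen x y) rl) \<and> in_span (rel2 sY sZ) (\<lambda>z. lsum (\<lambda>x. fsum (F x) z) rl)"
    unfolding P_def .
qed



lemma trilin_transfer:
  fixes F :: "'a::ab_group_add \<times> 'b::ab_group_add \<times> 'c::ab_group_add \<Rightarrow> ('y::ab_group_add \<times> 'z::ab_group_add) list"
    and s1 :: "'k::field \<Rightarrow> 'a \<Rightarrow> 'a" and s2 :: "'k \<Rightarrow> 'b \<Rightarrow> 'b" and s3 :: "'k \<Rightarrow> 'c \<Rightarrow> 'c"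
    and sY :: "'k \<Rightarrow> 'y \<Rightarrow> 'y" and sZ :: "'k \<Rightarrow> 'z \<Rightarrow> 'z"
  assumes A1: "\<And>a a' b d. teq2 sY sZ (F (a+a', b, d)) (F (a,b,d) @ F (a',b,d))"
   and A2: "\<And>a b b' d. teq2 sY sZ (F (a, b+b', d)) (F (a,b,d) @ F (a,b',d))"
   and A3: "\<And>a b d d'. teq2 sY sZ (F (a, b, d+d')) (F (a,b,d) @ F (a,b,d'))"
   and A4: "\<And>c a b d. teq2 sY sZ (F (s1 c a, b, d)) (scl sY c (F (a,b,d)))"
   and A5: "\<And>c a b d. teq2 sY sZ (F (a, s2 c b, d)) (scl sY c (F (a,b,d)))"
   and A6: "\<And>c a b d. teq2 sY sZ (F (a, b, s3 c d)) (scl sY c (F (a,b,d)))"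
   and T: "teq3 s1 s2 s3 t u"
  shows "teq2 sY sZ (concat (map F t)) (concat (map F u))"
  unfolding teq2_def
proof (rule transfer[where RA="rel3 s1 s2 s3"])
  show "in_span (rel3 s1 s2 s3) (\<lambda>z. fsum t z - fsum u z)" using T by (simp add: teq3_def)
  have SC: "in_span (rel2 sY sZ) (\<lambda>z. fsum (F p) z - c * fsum (F q) z)"
    if "teq2 sY sZ (F p) (scl sY c (F q))" for p q c
    using in_span_add[OF that[unfolded teq2_def] scl_span[of sY sZ c "F q"]]
    by (rule in_span_cong) simp
  define P where "P r \<longleftrightarrow> (\<exists>rl. r = (\<lambda>y. lsum (\<lambda>x. gen x y) rl) \<and> in_span (rel2 sY sZ) (\<lambda>z. lsum (\<lambda>x. fsum (F x) z) rl))" for r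
  have C1: "P (\<lambda>z. gen (a + a', b, d) z - gen (a, b, d) z - gen (a', b, d) z)" for a a' b d
    unfolding P_def
      by (rule exI[of _ "[(1,(a+a',b,d)),(-1,(a,b,d)),(-1,(a',b,d))]"])
         (use A1[of a a' b d] in \<open>auto simp: teq2_def elim!: in_span_cong\<close>)
  have C2: "P (\<lambda>z. gen (a, b+b', d) z - gen (a, b, d) z - gen (a, b', d) z)" for a b b' d
    unfolding P_def
      by (rule exI[of _ "[(1,(a,b+b',d)),(-1,(a,b,d)),(-1,(a,b',d))]"])
         (use A2[of a b b' d] in \<open>auto simp: teq2_def elim!: in_span_cong\<close>)
  have C3: "P (\<lambda>z. gen (a, b, d+d') z - gen (a, b, d) z - gen (a, b, d') z)" for a b d d'
    unfolding P_def
      by (rule exI[of _ "[(1,(a,b,d+d')),(-1,(a,b,d)),(-1,(a,b,d'))]"])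
         (use A3[of a b d d'] in \<open>auto simp: teq2_def elim!: in_span_cong\<close>)
  have C4: "P (\<lambda>z. gen (s1 c a, b, d) z - c * gen (a, b, d) z)" for c a b d
    unfolding P_def
      by (rule exI[of _ "[(1,(s1 c a,b,d)),(-c,(a,b,d))]"])
         (use SC[OF A4[where c=c and a=a and b=b and d=d]] in \<open>auto elim!: in_span_cong\<close>)
  have C5: "P (\<lambda>z. gen (a, s2 c b, d) z - c * gen (a, b, d) z)" for c a b d
    unfolding P_def
      by (rule exI[of _ "[(1,(a, s2 c b,d)),(-c,(a,b,d))]"])
         (use SC[OF A5[where c=c and a=a and b=b and d=d]] in \<open>auto elim!: in_span_cong\<close>)
  have C6: "P (\<lambda>z. gen (a, b, s3 c d) z - c * gen (a, b, d) z)" for c a b d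
    unfolding P_def
      by (rule exI[of _ "[(1,(a, b, s3 c d)),(-c,(a,b,d))]"])
         (use SC[OF A6[where c=c and a=a and b=b and d=d]] in \<open>auto elim!: in_span_cong\<close>)
  have "\<forall>r\<in>rel3 s1 s2 s3. P r" unfolding rel3_def by (auto intro: C1 C2 C3 C4 C5 C6)
  then show "\<forall>r\<in>rel3 s1 s2 s3. \<exists>rl. r = (\<lambda>y. lsum (\<lambda>x. gen x y) rl) \<and> in_span (rel2 sY sZ) (\<lambda>z. lsum (\<lambda>x. fsum (F x) z) rl)"
    unfolding P_def .
qed

lemma bilin_simple:
  fixes s1 :: "'k::field \<Rightarrow> 'a::ab_group_add \<Rightarrow> 'a" and s2 :: "'k \<Rightarrow> 'b::ab_group_add \<Rightarrow> 'b"
    and sY :: "'k \<Rightarrow> 'y::ab_group_add \<Rightarrow> 'y" and sZ :: "'k \<Rightarrow> 'z::ab_group_add \<Rightarrow> 'z"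
  assumes "k_linear s1 sY \<alpha>" "k_linear s2 sZ \<beta>" "teq2 s1 s2 t u"
  shows "teq2 sY sZ (concat (map (\<lambda>(a,b). [(\<alpha> a, \<beta> b)]) t)) (concat (map (\<lambda>(a,b). [(\<alpha> a, \<beta> b)]) u))"
  apply (rule bilin_transfer[OF _ _ _ _ assms(3)])
  using assms(1,2) by (auto simp: k_linear_def scl_def teq2_add1 teq2_add2 teq2_refl intro: teq2_sym[OF teq2_smove])

lemma bilin_swap:
  fixes s1 :: "'k::field \<Rightarrow> 'a::ab_group_add \<Rightarrow> 'a" and s2 :: "'k \<Rightarrow> 'b::ab_group_add \<Rightarrow> 'b"
    and sY :: "'k \<Rightarrow> 'y::ab_group_add \<Rightarrow> 'y" and sZ :: "'k \<Rightarrow> 'z::ab_group_add \<Rightarrow> 'z"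
  assumes "k_linear s2 sY \<alpha>" "k_linear s1 sZ \<beta>" "teq2 s1 s2 t u"
  shows "teq2 sY sZ (concat (map (\<lambda>(a,b). [(\<alpha> b, \<beta> a)]) t)) (concat (map (\<lambda>(a,b). [(\<alpha> b, \<beta> a)]) u))"
  apply (rule bilin_transfer[OF _ _ _ _ assms(3)])
  using assms(1,2) by (auto simp: k_linear_def scl_def teq2_add1 teq2_add2 teq2_refl intro: teq2_sym[OF teq2_smove])



lemma concat_singleton2[simp]: "concat (map (\<lambda>(a,b). [f a b]) xs) = map (\<lambda>(a,b). f a b) xs"
  by (induction xs) auto
lemma concat_singleton3[simp]: "concat (map (\<lambda>(a,b,c). [f a b c]) xs) = map (\<lambda>(a,b,c). f a b c) xs"
  by (induction xs) auto

lemma additive_sum_list: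
  fixes f :: "'a::monoid_add \<Rightarrow> 'b::ab_group_add"
  shows "(\<And>x y. f (x + y) = f x + f y) \<Longrightarrow> f (sum_list xs) = sum_list (map f xs)"
proof -
  assume A: "\<And>x y. f (x + y) = f x + f y"
  have "f 0 = 0" using A[of 0 0] by simp
  then show ?thesis using A by (induction xs) auto
qed

lemma teq2_fsum:
  fixes s1 :: "'k::field \<Rightarrow> 'a::ab_group_add \<Rightarrow> 'a"
  assumes "\<And>z. fsum t z = (fsum u z :: 'k)" shows "teq2 s1 s2 t u"
  unfolding teq2_def by (rule in_span_cong[OF in_span_zero]) (simp add: assms)

lemma teq2_distrib_list:
  fixes s1 :: "'k::field \<Rightarrow> 'b::ab_group_add \<Rightarrow> 'b" and s2 :: "'k \<Rightarrow> 'c::ab_group_add \<Rightarrow> 'c"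
  shows "teq2 s1 s2 (map (\<lambda>i. (f i + g i, h i)) l) (map (\<lambda>i. (f i, h i)) l @ map (\<lambda>i. (g i, h i)) l)"
proof (induction l)
  case Nil then show ?case by (simp add: teq2_refl)
next
  case (Cons i l)
  have "teq2 s1 s2 ([(f i + g i, h i)] @ map (\<lambda>i. (f i + g i, h i)) l)
                   ([(f i, h i),(g i, h i)] @ (map (\<lambda>i. (f i, h i)) l @ map (\<lambda>i. (g i, h i)) l))"
    by (rule teq2_append[OF teq2_add1 Cons])
  moreover have "teq2 s1 s2 ([(f i, h i),(g i, h i)] @ (map (\<lambda>i. (f i, h i)) l @ map (\<lambda>i. (g i, h i)) l))
     (map (\<lambda>i. (f i, h i)) (i#l) @ map (\<lambda>i. (g i, h i)) (i#l))"
    by (rule teq2_fsum) (simp add: algebra_simps)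
  ultimately show ?case by (auto intro: teq2_trans)
qed

lemma concat_map_concat: "concat (map F (concat (map f xs))) = concat (map (\<lambda>i. concat (map F (f i))) xs)"
  by (induction xs) auto

lemma concat_map_sing: "(\<And>i. i \<in> set l \<Longrightarrow> g i = [h i]) \<Longrightarrow> concat (map g l) = map h l"
  by (induction l) auto



context
  fixes sA :: "'k::field \<Rightarrow> 'a::{ring,monoid_mult} \<Rightarrow> 'a"
    and sB :: "'k \<Rightarrow> 'b::{ring,monoid_mult} \<Rightarrow> 'b"
    and sC :: "'k \<Rightarrow> 'c::{ring,monoid_mult} \<Rightarrow> 'c"
    and \<Delta> :: "'a \<Rightarrow> ('a \<times> 'a) list" and S :: "'a \<Rightarrow> 'a" and \<epsilon> :: "'a \<Rightarrow> 'k"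
    and \<Phi> :: "'a \<Rightarrow> 'b" and \<Psi> :: "'a \<Rightarrow> 'c"
  assumes hopf: "hopf_algebra sA \<Delta> S \<epsilon>"
    and kB: "k_algebra sB" and kC: "k_algebra sC"
    and hPhi: "unital_alg_hom sA sB \<Phi>"
    and hPsi: "unital_alg_hom sA sC \<Psi>"
begin

lemma kA: "k_algebra sA" using hopf by (simp add: hopf_algebra_def)
lemma Dadd: "teq2 sA sA (\<Delta> (x + y)) (\<Delta> x @ \<Delta> y)" using hopf by (simp add: hopf_algebra_def)
lemma Dscal: "teq2 sA sA (\<Delta> (sA c x)) (map (\<lambda>(a, b). (sA c a, b)) (\<Delta> x))" using hopf by (simp add: hopf_algebra_def)
lemma coass: "teq3 sA sA sA [(a1, a2, b). (a, b) \<leftarrow> \<Delta> x, (a1, a2) \<leftarrow> \<Delta> a]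
                     [(a, b1, b2). (a, b) \<leftarrow> \<Delta> x, (b1, b2) \<leftarrow> \<Delta> b]" using hopf by (simp add: hopf_algebra_def)
lemma eps_add: "\<epsilon> (x + y) = \<epsilon> x + \<epsilon> y" using hopf by (simp add: hopf_algebra_def k_linear_def)
lemma eps_scal: "\<epsilon> (sA c x) = c * \<epsilon> x" using hopf by (simp add: hopf_algebra_def k_linear_def)
lemma counit: "sum_list (map (\<lambda>(a,b). sA (\<epsilon> b) a) (\<Delta> x)) = x" using hopf by (simp add: hopf_algebra_def)
lemma S_add: "S (x + y) = S x + S y" using hopf by (simp add: hopf_algebra_def k_linear_def)
lemma S_scal: "S (sA c x) = sA c (S x)" using hopf by (simp add: hopf_algebra_def k_linear_def)
lemma antiL: "sum_list (map (\<lambda>(a,b). S a * b) (\<Delta> x)) = sA (\<epsilon> x) 1" using hopf by (simp add: hopf_algebra_def)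
lemma antiR: "sum_list (map (\<lambda>(a,b). a * S b) (\<Delta> x)) = sA (\<epsilon> x) 1" using hopf by (simp add: hopf_algebra_def)

lemma Phi_add: "\<Phi> (x + y) = \<Phi> x + \<Phi> y" using hPhi by (simp add: unital_alg_hom_def k_linear_def)
lemma Phi_scal: "\<Phi> (sA c x) = sB c (\<Phi> x)" using hPhi by (simp add: unital_alg_hom_def k_linear_def)
lemma Phi_mult: "\<Phi> (x * y) = \<Phi> x * \<Phi> y" using hPhi by (simp add: unital_alg_hom_def)
lemma Phi_one: "\<Phi> 1 = 1" using hPhi by (simp add: unital_alg_hom_def)
lemma Psi_add: "\<Psi> (x + y) = \<Psi> x + \<Psi> y" using hPsi by (simp add: unital_alg_hom_def k_linear_def)
lemma Psi_scal: "\<Psi> (sA c x) = sC c (\<Psi> x)" using hPsi by (simp add: unital_alg_hom_def k_linear_def)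
lemma Psi_mult: "\<Psi> (x * y) = \<Psi> x * \<Psi> y" using hPsi by (simp add: unital_alg_hom_def)
lemma Psi_one: "\<Psi> 1 = 1" using hPsi by (simp add: unital_alg_hom_def)

lemma sA_add: "sA c (x + y) = sA c x + sA c y" using kA by (simp add: k_algebra_def)
lemma sA_add2: "sA (c + d) x = sA c x + sA d x" using kA by (simp add: k_algebra_def)
lemma sA_comp: "sA c (sA d x) = sA (c * d) x" using kA by (simp add: k_algebra_def)
lemma sA_multL: "sA c x * y = sA c (x * y)" using kA by (simp add: k_algebra_def)
lemma sA_multR: "x * sA c y = sA c (x * y)" using kA unfolding k_algebra_def by metis
lemma sB_multL: "sB c x * y = sB c (x * y)" using kB by (simp add: k_algebra_def)
lemma sB_multR: "x * sB c y = sB c (x * y)" using kB unfolding k_algebra_def by metis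
lemma sB_add: "sB c (x + y) = sB c x + sB c y" using kB by (simp add: k_algebra_def)
lemma sC_add: "sC c (x + y) = sC c x + sC c y" using kC by (simp add: k_algebra_def)
lemma sC_comp: "sC c (sC d x) = sC (c * d) x" using kC by (simp add: k_algebra_def)

lemma lin_id_B: "k_linear sB sB id" by (simp add: k_linear_def)
lemma lin_id_C: "k_linear sC sC id" by (simp add: k_linear_def)
lemma lin_rmultB: "k_linear sB sB (\<lambda>y. y * m)" by (simp add: k_linear_def distrib_right sB_multL)
lemma lin_Psi: "k_linear sA sC \<Psi>" using hPsi by (simp add: unital_alg_hom_def)
lemma lin_PhiR: "k_linear sA sB (\<lambda>p. \<Phi> p * m)" by (simp add: k_linear_def Phi_add Phi_scal distrib_right sB_multL)

lemma dir1:
  assumes H: "\<forall>x. teq2 sC sB (tmap \<Psi> \<Phi> (\<Delta> x)) (tmap \<Psi> \<Phi> (flip_t (\<Delta> x)))"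
  shows "teq2 sB sC (tmap \<Phi> \<Psi> (ad \<Delta> S x)) [(1, \<Psi> x)]"
proof -
  define M2 where "M2 = (\<lambda>(p::'a,q::'a,r::'a). [(\<Phi> q * \<Phi> (S r), \<Psi> p)])"
  have eq0: "tmap \<Phi> \<Psi> (ad \<Delta> S x) = concat (map (\<lambda>(a,b). map (\<lambda>(a1,a2). (\<Phi> a1 * \<Phi> (S b), \<Psi> a2)) (\<Delta> a)) (\<Delta> x))"
    by (auto simp: tmap_def ad_def map_concat Phi_mult intro!: arg_cong[where f=concat] map_cong)
  have eq1: "concat (map M2 [(a1, a2, b). (a, b) \<leftarrow> \<Delta> x, (a1, a2) \<leftarrow> \<Delta> a]) =
     concat (map (\<lambda>(a,b). map (\<lambda>(a1,a2). (\<Phi> a2 * \<Phi> (S b), \<Psi> a1)) (\<Delta> a)) (\<Delta> x))"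
    apply (simp add: concat_map_concat)
    apply (intro arg_cong[where f=concat] map_cong refl)
    apply (clarsimp simp: map_map comp_def)
    apply (rule concat_map_sing)
    apply (auto simp: M2_def)
    done
  have eq2: "concat (map M2 [(a, b1, b2). (a, b) \<leftarrow> \<Delta> x, (b1, b2) \<leftarrow> \<Delta> b]) =
     concat (map (\<lambda>(a,b). map (\<lambda>(b1,b2). (\<Phi> b1 * \<Phi> (S b2), \<Psi> a)) (\<Delta> b)) (\<Delta> x))"
    apply (simp add: concat_map_concat)
    apply (intro arg_cong[where f=concat] map_cong refl)
    apply (clarsimp simp: map_map comp_def)
    apply (rule concat_map_sing)
    apply (auto simp: M2_def)
    done
  have s1: "teq2 sB sC (concat (map (\<lambda>(a,b). map (\<lambda>(a1,a2). (\<Phi> a2 * \<Phi> (S b), \<Psi> a1)) (\<Delta> a)) (\<Delta> x)))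
      (concat (map (\<lambda>(a,b). map (\<lambda>(a1,a2). (\<Phi> a1 * \<Phi> (S b), \<Psi> a2)) (\<Delta> a)) (\<Delta> x)))"
  proof (rule teq2_concat)
    fix i assume "i \<in> set (\<Delta> x)"
    obtain a b where i: "i = (a,b)" by force
    have "teq2 sB sC (concat (map (\<lambda>(p,q). [((\<lambda>y. y * \<Phi> (S b)) q, id p)]) (tmap \<Psi> \<Phi> (\<Delta> a))))
                     (concat (map (\<lambda>(p,q). [((\<lambda>y. y * \<Phi> (S b)) q, id p)]) (tmap \<Psi> \<Phi> (flip_t (\<Delta> a)))))"
      by (rule bilin_swap[OF lin_rmultB lin_id_C H[rule_format]])
    moreover have "concat (map (\<lambda>(p,q). [((\<lambda>y. y * \<Phi> (S b)) q, id p)]) (tmap \<Psi> \<Phi> (\<Delta> a)))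
       = map (\<lambda>(a1,a2). (\<Phi> a2 * \<Phi> (S b), \<Psi> a1)) (\<Delta> a)"
      unfolding tmap_def map_map by (rule concat_map_sing) auto
    moreover have "concat (map (\<lambda>(p,q). [((\<lambda>y. y * \<Phi> (S b)) q, id p)]) (tmap \<Psi> \<Phi> (flip_t (\<Delta> a))))
       = map (\<lambda>(a1,a2). (\<Phi> a1 * \<Phi> (S b), \<Psi> a2)) (\<Delta> a)"
      unfolding tmap_def flip_t_def map_map by (rule concat_map_sing) auto
    ultimately show "teq2 sB sC ((\<lambda>(a,b). map (\<lambda>(a1,a2). (\<Phi> a2 * \<Phi> (S b), \<Psi> a1)) (\<Delta> a)) i)
        ((\<lambda>(a,b). map (\<lambda>(a1,a2). (\<Phi> a1 * \<Phi> (S b), \<Psi> a2)) (\<Delta> a)) i)"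
      by (simp add: i)
  qed
  have s2: "teq2 sB sC (concat (map M2 [(a1, a2, b). (a, b) \<leftarrow> \<Delta> x, (a1, a2) \<leftarrow> \<Delta> a]))
                       (concat (map M2 [(a, b1, b2). (a, b) \<leftarrow> \<Delta> x, (b1, b2) \<leftarrow> \<Delta> b]))"
  proof (rule trilin_transfer[OF _ _ _ _ _ _ coass])
    show "teq2 sB sC (M2 (a+a', b, d)) (M2 (a,b,d) @ M2 (a',b,d))" for a a' b d
      by (simp add: M2_def Psi_add teq2_add2)
    show "teq2 sB sC (M2 (a, b+b', d)) (M2 (a,b,d) @ M2 (a,b',d))" for a b b' d
      by (simp add: M2_def Phi_add distrib_right teq2_add1)
    show "teq2 sB sC (M2 (a, b, d+d')) (M2 (a,b,d) @ M2 (a,b,d'))" for a b d d'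
      by (simp add: M2_def Phi_add S_add distrib_left teq2_add1)
    show "teq2 sB sC (M2 (sA c a, b, d)) (scl sB c (M2 (a,b,d)))" for c a b d
      by (simp add: M2_def Psi_scal scl_def teq2_sym[OF teq2_smove])
    show "teq2 sB sC (M2 (a, sA c b, d)) (scl sB c (M2 (a,b,d)))" for c a b d
      by (simp add: M2_def Phi_scal scl_def sB_multL teq2_refl)
    show "teq2 sB sC (M2 (a, b, sA c d)) (scl sB c (M2 (a,b,d)))" for c a b d
      by (simp add: M2_def Phi_scal S_scal scl_def sB_multR teq2_refl)
  qed
  have s3: "teq2 sB sC (concat (map (\<lambda>(a,b). map (\<lambda>(b1,b2). (\<Phi> b1 * \<Phi> (S b2), \<Psi> a)) (\<Delta> b)) (\<Delta> x)))
     (concat (map (\<lambda>(a,b). [(1, \<Psi> (sA (\<epsilon> b) a))]) (\<Delta> x)))"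
  proof (rule teq2_concat)
    fix i assume "i \<in> set (\<Delta> x)"
    obtain a b where i: "i = (a,b)" by force
    define T where "T = (\<lambda>m. [(\<Phi> m, \<Psi> a)])"
    have "teq2 sB sC (T (sum_list (map (\<lambda>(b1,b2). b1 * S b2) (\<Delta> b)))) (concat (map T (map (\<lambda>(b1,b2). b1 * S b2) (\<Delta> b))))"
      by (rule teq2_additive_map) (simp add: T_def Phi_add teq2_add1)
    moreover have "concat (map T (map (\<lambda>(b1,b2). b1 * S b2) (\<Delta> b))) = map (\<lambda>(b1,b2). (\<Phi> b1 * \<Phi> (S b2), \<Psi> a)) (\<Delta> b)"
      unfolding map_map by (rule concat_map_sing) (auto simp: T_def Phi_mult)
    ultimately have "teq2 sB sC [(sB (\<epsilon> b) 1, \<Psi> a)] (map (\<lambda>(b1,b2). (\<Phi> b1 * \<Phi> (S b2), \<Psi> a)) (\<Delta> b))"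
      by (simp add: T_def antiR Phi_scal Phi_one)
    moreover have "teq2 sB sC [(sB (\<epsilon> b) 1, \<Psi> a)] [(1, \<Psi> (sA (\<epsilon> b) a))]"
      using teq2_smove by (simp add: Psi_scal)
    ultimately show "teq2 sB sC ((\<lambda>(a,b). map (\<lambda>(b1,b2). (\<Phi> b1 * \<Phi> (S b2), \<Psi> a)) (\<Delta> b)) i)
       ((\<lambda>(a,b). [(1, \<Psi> (sA (\<epsilon> b) a))]) i)"
      by (auto simp: i intro: teq2_trans teq2_sym)
  qed
  have s4: "teq2 sB sC (concat (map (\<lambda>(a,b). [(1, \<Psi> (sA (\<epsilon> b) a))]) (\<Delta> x))) [(1, \<Psi> x)]"
  proof -
    have "teq2 sB sC [(1, sum_list (map (\<lambda>(a,b). \<Psi> (sA (\<epsilon> b) a)) (\<Delta> x)))] (map (\<lambda>y. (1, (\<lambda>(a,b). \<Psi> (sA (\<epsilon> b) a)) y)) (\<Delta> x))"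
      by (rule teq2_sum2)
    moreover have "map (\<lambda>y. (1, (\<lambda>(a,b). \<Psi> (sA (\<epsilon> b) a)) y)) (\<Delta> x) = concat (map (\<lambda>(a,b). [(1, \<Psi> (sA (\<epsilon> b) a))]) (\<Delta> x))"
      by (rule sym, rule concat_map_sing) auto
    moreover have "sum_list (map (\<lambda>(a,b). \<Psi> (sA (\<epsilon> b) a)) (\<Delta> x)) = \<Psi> x"
      using additive_sum_list[of \<Psi> "map (\<lambda>(a,b). sA (\<epsilon> b) a) (\<Delta> x)", OF Psi_add] counit[of x, unfolded split_def]
      by (simp add: comp_def split_def)
    ultimately show ?thesis by (metis teq2_sym)
  qed
  show ?thesis
    unfolding eq0
    using teq2_sym[OF s1] s2[unfolded eq1 eq2] s3 s4 by (blast intro: teq2_trans)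
qed

lemma teq2_map: "(\<And>i. i \<in> set xs \<Longrightarrow> teq2 s1 s2 [f i] [g i]) \<Longrightarrow> teq2 s1 s2 (map f xs) (map g xs)"
proof -
  assume "\<And>i. i \<in> set xs \<Longrightarrow> teq2 s1 s2 [f i] [g i]"
  then have "teq2 s1 s2 (concat (map (\<lambda>i. [f i]) xs)) (concat (map (\<lambda>i. [g i]) xs))" by (rule teq2_concat)
  moreover have "concat (map (\<lambda>i. [f i]) xs) = map f xs" "concat (map (\<lambda>i. [g i]) xs) = map g xs"
    by (rule concat_map_sing, simp)+
  ultimately show ?thesis by simp
qed

lemma dir2:
  assumes G: "\<forall>x. teq2 sB sC (tmap \<Phi> \<Psi> (ad \<Delta> S x)) [(1, \<Psi> x)]"
  shows "teq2 sC sB (tmap \<Psi> \<Phi> (\<Delta> x)) (tmap \<Psi> \<Phi> (flip_t (\<Delta> x)))"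
proof -
  define T where "T = (\<lambda>a' m. map (\<lambda>(p,q). (\<Phi> p * \<Phi> m, \<Psi> q)) (\<Delta> a'))"
  define M4 where "M4 = (\<lambda>(a'::'a, b'::'a, b::'a). T a' (S b' * b))"
  define M5 where "M5 = (\<lambda>(p::'a,q::'a,b::'a). [(\<Phi> p, \<Psi> (sA (\<epsilon> b) q))])"
  define FL where "FL = map (\<lambda>(a,b). (\<Phi> b, \<Psi> a)) (\<Delta> x)"
  define FR where "FR = map (\<lambda>(a,b). (\<Phi> a, \<Psi> b)) (\<Delta> x)"
  have T_add: "teq2 sB sC (T a' (m+m')) (T a' m @ T a' m')" for a' m m'
  proof -
    have "teq2 sB sC (map (\<lambda>i. (\<Phi> (fst i) * \<Phi> m + \<Phi> (fst i) * \<Phi> m', \<Psi> (snd i))) (\<Delta> a'))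
       (map (\<lambda>i. (\<Phi> (fst i) * \<Phi> m, \<Psi> (snd i))) (\<Delta> a') @ map (\<lambda>i. (\<Phi> (fst i) * \<Phi> m', \<Psi> (snd i))) (\<Delta> a'))"
      by (rule teq2_distrib_list)
    then show ?thesis unfolding T_def split_def by (simp add: Phi_add distrib_left)
  qed
  have T_addA: "teq2 sB sC (T (a+a') m) (T a m @ T a' m)" for a a' m
  proof -
    have "teq2 sB sC (concat (map (\<lambda>(p,q). [((\<lambda>p. \<Phi> p * \<Phi> m) p, \<Psi> q)]) (\<Delta> (a+a'))))
       (concat (map (\<lambda>(p,q). [((\<lambda>p. \<Phi> p * \<Phi> m) p, \<Psi> q)]) (\<Delta> a @ \<Delta> a')))"
      by (rule bilin_simple[OF lin_PhiR lin_Psi Dadd])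
    then show ?thesis unfolding T_def by simp
  qed
  have T_scalA: "teq2 sB sC (T (sA c a) m) (scl sB c (T a m))" for c a m
  proof -
    have "teq2 sB sC (concat (map (\<lambda>(p,q). [((\<lambda>p. \<Phi> p * \<Phi> m) p, \<Psi> q)]) (\<Delta> (sA c a))))
       (concat (map (\<lambda>(p,q). [((\<lambda>p. \<Phi> p * \<Phi> m) p, \<Psi> q)]) (map (\<lambda>(a, b). (sA c a, b)) (\<Delta> a))))"
      by (rule bilin_simple[OF lin_PhiR lin_Psi Dscal])
    then show ?thesis unfolding T_def scl_def by (simp add: map_map comp_def split_def Phi_scal sB_multL)
  qed
  have T_scal: "T a (sA c m) = scl sB c (T a m)" for c a m
    unfolding T_def scl_def by (simp add: map_map comp_def split_def Phi_scal sB_multR)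
  have t1: "teq2 sB sC (concat (map (\<lambda>(a,b). concat (map (\<lambda>(a',b'). T a' (S b' * b)) (\<Delta> a))) (\<Delta> x)))
     (concat (map (\<lambda>(a,b). [(\<Phi> b, \<Psi> a)]) (\<Delta> x)))"
  proof (rule teq2_concat)
    fix i assume "i \<in> set (\<Delta> x)"
    obtain a b where i: "i = (a,b)" by force
    have "teq2 sB sC (concat (map (\<lambda>(p,q). [((\<lambda>y. y * \<Phi> b) p, id q)]) (tmap \<Phi> \<Psi> (ad \<Delta> S a))))
                     (concat (map (\<lambda>(p,q). [((\<lambda>y. y * \<Phi> b) p, id q)]) [(1, \<Psi> a)]))"
      by (rule bilin_simple[OF lin_rmultB lin_id_C G[rule_format]])
    moreover have "concat (map (\<lambda>(p,q). [((\<lambda>y. y * \<Phi> b) p, id q)]) (tmap \<Phi> \<Psi> (ad \<Delta> S a)))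
       = concat (map (\<lambda>(a',b'). T a' (S b' * b)) (\<Delta> a))"
    proof -
      have "concat (map (\<lambda>(p,q). [((\<lambda>y. y * \<Phi> b) p, id q)]) (tmap \<Phi> \<Psi> (ad \<Delta> S a)))
          = map (\<lambda>(p,q). (p * \<Phi> b, q)) (tmap \<Phi> \<Psi> (ad \<Delta> S a))" by simp
      also have "\<dots> = concat (map (\<lambda>(a',b'). T a' (S b' * b)) (\<Delta> a))"
        unfolding tmap_def ad_def map_concat map_map
        by (intro arg_cong[where f=concat] map_cong refl) (auto simp: T_def Phi_mult mult.assoc)
      finally show ?thesis .
    qed
    ultimately show "teq2 sB sC ((\<lambda>(a,b). concat (map (\<lambda>(a',b'). T a' (S b' * b)) (\<Delta> a))) i) ((\<lambda>(a,b). [(\<Phi> b, \<Psi> a)]) i)"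
      by (simp add: i)
  qed
  have eqM4L: "concat (map M4 [(a1, a2, b). (a, b) \<leftarrow> \<Delta> x, (a1, a2) \<leftarrow> \<Delta> a]) =
     concat (map (\<lambda>(a,b). concat (map (\<lambda>(a',b'). T a' (S b' * b)) (\<Delta> a))) (\<Delta> x))"
    apply (simp add: concat_map_concat)
    apply (intro arg_cong[where f=concat] map_cong refl)
    apply (clarsimp simp: map_map comp_def)
    apply (intro arg_cong[where f=concat] map_cong refl)
    apply (auto simp: M4_def)
    done
  have eqM4R: "concat (map M4 [(a, b1, b2). (a, b) \<leftarrow> \<Delta> x, (b1, b2) \<leftarrow> \<Delta> b]) =
     concat (map (\<lambda>(a,b). concat (map (\<lambda>(b1,b2). T a (S b1 * b2)) (\<Delta> b))) (\<Delta> x))"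
    apply (simp add: concat_map_concat)
    apply (intro arg_cong[where f=concat] map_cong refl)
    apply (clarsimp simp: map_map comp_def)
    apply (intro arg_cong[where f=concat] map_cong refl)
    apply (auto simp: M4_def)
    done
  have t2: "teq2 sB sC (concat (map M4 [(a1, a2, b). (a, b) \<leftarrow> \<Delta> x, (a1, a2) \<leftarrow> \<Delta> a]))
                       (concat (map M4 [(a, b1, b2). (a, b) \<leftarrow> \<Delta> x, (b1, b2) \<leftarrow> \<Delta> b]))"
  proof (rule trilin_transfer[OF _ _ _ _ _ _ coass])
    show "teq2 sB sC (M4 (a+a', b, d)) (M4 (a,b,d) @ M4 (a',b,d))" for a a' b d
      by (simp add: M4_def T_addA)
    show "teq2 sB sC (M4 (a, b+b', d)) (M4 (a,b,d) @ M4 (a,b',d))" for a b b' d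
      by (simp add: M4_def S_add distrib_right T_add)
    show "teq2 sB sC (M4 (a, b, d+d')) (M4 (a,b,d) @ M4 (a,b,d'))" for a b d d'
      by (simp add: M4_def distrib_left T_add)
    show "teq2 sB sC (M4 (sA c a, b, d)) (scl sB c (M4 (a,b,d)))" for c a b d
      by (simp add: M4_def T_scalA)
    show "teq2 sB sC (M4 (a, sA c b, d)) (scl sB c (M4 (a,b,d)))" for c a b d
      by (simp add: M4_def S_scal sA_multL T_scal teq2_refl)
    show "teq2 sB sC (M4 (a, b, sA c d)) (scl sB c (M4 (a,b,d)))" for c a b d
      by (simp add: M4_def sA_multR T_scal teq2_refl)
  qed
  have t3: "teq2 sB sC (concat (map (\<lambda>(a,b). concat (map (\<lambda>(b1,b2). T a (S b1 * b2)) (\<Delta> b))) (\<Delta> x)))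
     (concat (map (\<lambda>(a,b). map (\<lambda>(p,q). (\<Phi> p, \<Psi> (sA (\<epsilon> b) q))) (\<Delta> a)) (\<Delta> x)))"
  proof (rule teq2_concat)
    fix i assume "i \<in> set (\<Delta> x)"
    obtain a b where i: "i = (a,b)" by force
    have "teq2 sB sC (T a (sum_list (map (\<lambda>(b1,b2). S b1 * b2) (\<Delta> b)))) (concat (map (T a) (map (\<lambda>(b1,b2). S b1 * b2) (\<Delta> b))))"
      by (rule teq2_additive_map) (rule T_add)
    moreover have "concat (map (T a) (map (\<lambda>(b1,b2). S b1 * b2) (\<Delta> b))) = concat (map (\<lambda>(b1,b2). T a (S b1 * b2)) (\<Delta> b))"
      by (simp add: map_map comp_def split_def)
    moreover have "T a (sum_list (map (\<lambda>(b1,b2). S b1 * b2) (\<Delta> b))) = map (\<lambda>(p,q). (sB (\<epsilon> b) (\<Phi> p), \<Psi> q)) (\<Delta> a)"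
      by (simp add: antiL T_def Phi_scal Phi_one sB_multR)
    moreover have "teq2 sB sC (map (\<lambda>(p,q). (sB (\<epsilon> b) (\<Phi> p), \<Psi> q)) (\<Delta> a)) (map (\<lambda>(p,q). (\<Phi> p, \<Psi> (sA (\<epsilon> b) q))) (\<Delta> a))"
      by (rule teq2_map) (auto simp: Psi_scal teq2_smove)
    ultimately show "teq2 sB sC ((\<lambda>(a,b). concat (map (\<lambda>(b1,b2). T a (S b1 * b2)) (\<Delta> b))) i)
       ((\<lambda>(a,b). map (\<lambda>(p,q). (\<Phi> p, \<Psi> (sA (\<epsilon> b) q))) (\<Delta> a)) i)"
      by (auto simp: i intro: teq2_trans teq2_sym)
  qed
  have eqM5L: "concat (map M5 [(a1, a2, b). (a, b) \<leftarrow> \<Delta> x, (a1, a2) \<leftarrow> \<Delta> a]) =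
     concat (map (\<lambda>(a,b). map (\<lambda>(p,q). (\<Phi> p, \<Psi> (sA (\<epsilon> b) q))) (\<Delta> a)) (\<Delta> x))"
    apply (simp add: concat_map_concat)
    apply (intro arg_cong[where f=concat] map_cong refl)
    apply (clarsimp simp: map_map comp_def)
    apply (rule concat_map_sing)
    apply (auto simp: M5_def)
    done
  have eqM5R: "concat (map M5 [(a, b1, b2). (a, b) \<leftarrow> \<Delta> x, (b1, b2) \<leftarrow> \<Delta> b]) =
     concat (map (\<lambda>(a,b). map (\<lambda>(b1,b2). (\<Phi> a, \<Psi> (sA (\<epsilon> b2) b1))) (\<Delta> b)) (\<Delta> x))"
    apply (simp add: concat_map_concat)
    apply (intro arg_cong[where f=concat] map_cong refl)
    apply (clarsimp simp: map_map comp_def)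
    apply (rule concat_map_sing)
    apply (auto simp: M5_def)
    done
  have t4: "teq2 sB sC (concat (map M5 [(a1, a2, b). (a, b) \<leftarrow> \<Delta> x, (a1, a2) \<leftarrow> \<Delta> a]))
                       (concat (map M5 [(a, b1, b2). (a, b) \<leftarrow> \<Delta> x, (b1, b2) \<leftarrow> \<Delta> b]))"
  proof (rule trilin_transfer[OF _ _ _ _ _ _ coass])
    show "teq2 sB sC (M5 (a+a', b, d)) (M5 (a,b,d) @ M5 (a',b,d))" for a a' b d
      by (simp add: M5_def Phi_add teq2_add1)
    show "teq2 sB sC (M5 (a, b+b', d)) (M5 (a,b,d) @ M5 (a,b',d))" for a b b' d
      by (simp add: M5_def sA_add Psi_add teq2_add2)
    show "teq2 sB sC (M5 (a, b, d+d')) (M5 (a,b,d) @ M5 (a,b,d'))" for a b d d'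
      by (simp add: M5_def eps_add sA_add2 Psi_add teq2_add2)
    show "teq2 sB sC (M5 (sA c a, b, d)) (scl sB c (M5 (a,b,d)))" for c a b d
      by (simp add: M5_def Phi_scal scl_def teq2_refl)
    show "teq2 sB sC (M5 (a, sA c b, d)) (scl sB c (M5 (a,b,d)))" for c a b d
    proof -
      have e: "\<Psi> (sA (\<epsilon> d) (sA c b)) = sC c (\<Psi> (sA (\<epsilon> d) b))" 
      proof -
        have "sA (\<epsilon> d) (sA c b) = sA c (sA (\<epsilon> d) b)" by (simp add: sA_comp mult.commute)
        then show ?thesis by (simp only: Psi_scal[of c])
      qed
      show ?thesis unfolding M5_def scl_def
        by (simp only: prod.case e list.map) (rule teq2_sym[OF teq2_smove])
    qed
    show "teq2 sB sC (M5 (a, b, sA c d)) (scl sB c (M5 (a,b,d)))" for c a b d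
    proof -
      have "sA (\<epsilon> (sA c d)) b = sA c (sA (\<epsilon> d) b)" by (simp add: sA_comp eps_scal)
      then have e2: "\<Psi> (sA (\<epsilon> (sA c d)) b) = sC c (\<Psi> (sA (\<epsilon> d) b))" by (simp only: Psi_scal)
      show ?thesis unfolding M5_def scl_def
        by (simp only: prod.case e2 list.map) (rule teq2_sym[OF teq2_smove])
    qed
  qed
  have t5: "teq2 sB sC (concat (map (\<lambda>(a,b). map (\<lambda>(b1,b2). (\<Phi> a, \<Psi> (sA (\<epsilon> b2) b1))) (\<Delta> b)) (\<Delta> x)))
      (concat (map (\<lambda>(a,b). [(\<Phi> a, \<Psi> b)]) (\<Delta> x)))"
  proof (rule teq2_concat)
    fix i assume "i \<in> set (\<Delta> x)"
    obtain a b where i: "i = (a,b)" by force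
    have "teq2 sB sC [(\<Phi> a, sum_list (map (\<lambda>(b1,b2). \<Psi> (sA (\<epsilon> b2) b1)) (\<Delta> b)))] (map (\<lambda>y. (\<Phi> a, (\<lambda>(b1,b2). \<Psi> (sA (\<epsilon> b2) b1)) y)) (\<Delta> b))"
      by (rule teq2_sum2)
    moreover have "map (\<lambda>y. (\<Phi> a, (\<lambda>(b1,b2). \<Psi> (sA (\<epsilon> b2) b1)) y)) (\<Delta> b) = map (\<lambda>(b1,b2). (\<Phi> a, \<Psi> (sA (\<epsilon> b2) b1))) (\<Delta> b)"
      by (simp add: split_def)
    moreover have "sum_list (map (\<lambda>(b1,b2). \<Psi> (sA (\<epsilon> b2) b1)) (\<Delta> b)) = \<Psi> b"
      using additive_sum_list[of \<Psi> "map (\<lambda>(a,b). sA (\<epsilon> b) a) (\<Delta> b)", OF Psi_add] counit[of b, unfolded split_def]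
      by (simp add: comp_def split_def)
    ultimately show "teq2 sB sC ((\<lambda>(a,b). map (\<lambda>(b1,b2). (\<Phi> a, \<Psi> (sA (\<epsilon> b2) b1))) (\<Delta> b)) i)
      ((\<lambda>(a,b). [(\<Phi> a, \<Psi> b)]) i)"
      by (auto simp: i intro: teq2_sym)
  qed
  have FLFR: "teq2 sB sC FL FR"
  proof -
    have "teq2 sB sC FL (concat (map (\<lambda>(a,b). [(\<Phi> a, \<Psi> b)]) (\<Delta> x)))"
    proof -
      have FL_eq: "FL = concat (map (\<lambda>(a,b). [(\<Phi> b, \<Psi> a)]) (\<Delta> x))" by (simp add: FL_def)
      show ?thesis unfolding FL_eq
        by (rule teq2_trans[OF teq2_sym[OF t1] teq2_trans[OF t2[unfolded eqM4L eqM4R] teq2_trans[OF t3 teq2_trans[OF t4[unfolded eqM5L eqM5R] t5]]]])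
    qed
    then show ?thesis unfolding FR_def by simp
  qed
  have "teq2 sC sB (concat (map (\<lambda>(a,b). [(id b, id a)]) FL)) (concat (map (\<lambda>(a,b). [(id b, id a)]) FR))"
    by (rule bilin_swap[OF lin_id_C lin_id_B FLFR])
  then show ?thesis
    unfolding FL_def FR_def tmap_def flip_t_def by (simp add: map_map comp_def split_def)
qed

end

theorem proposition3p9:
  fixes sA :: "'k::field \<Rightarrow> 'a::{ring,monoid_mult} \<Rightarrow> 'a"
    and sB :: "'k \<Rightarrow> 'b::{ring,monoid_mult} \<Rightarrow> 'b"
    and sC :: "'k \<Rightarrow> 'c::{ring,monoid_mult} \<Rightarrow> 'c"
    and \<Delta> :: "'a \<Rightarrow> ('a \<times> 'a) list" and S :: "'a \<Rightarrow> 'a" and \<epsilon> :: "'a \<Rightarrow> 'k"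
    and \<Phi> :: "'a \<Rightarrow> 'b" and \<Psi> :: "'a \<Rightarrow> 'c"
  assumes "hopf_algebra sA \<Delta> S \<epsilon>"
    and "k_algebra sB" and "k_algebra sC"
    and "unital_alg_hom sA sB \<Phi>" and "surj \<Phi>"
    and "unital_alg_hom sA sC \<Psi>" and "surj \<Psi>"
  shows "(\<forall>x. teq2 sC sB (tmap \<Psi> \<Phi> (\<Delta> x)) (tmap \<Psi> \<Phi> (flip_t (\<Delta> x))))
     \<longleftrightarrow> (\<forall>x. teq2 sB sC (tmap \<Phi> \<Psi> (ad \<Delta> S x)) [(1, \<Psi> x)])"
proof
  assume H: "\<forall>x. teq2 sC sB (tmap \<Psi> \<Phi> (\<Delta> x)) (tmap \<Psi> \<Phi> (flip_t (\<Delta> x)))"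
  show "\<forall>x. teq2 sB sC (tmap \<Phi> \<Psi> (ad \<Delta> S x)) [(1, \<Psi> x)]"
    using dir1[OF assms(1,2,3,4,6) H] by blast
next
  assume G: "\<forall>x. teq2 sB sC (tmap \<Phi> \<Psi> (ad \<Delta> S x)) [(1, \<Psi> x)]"
  show "\<forall>x. teq2 sC sB (tmap \<Psi> \<Phi> (\<Delta> x)) (tmap \<Psi> \<Phi> (flip_t (\<Delta> x)))"
    using dir2[OF assms(1,2,3,4,6) G] by blast
qed

end
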